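(* Let $N\ge1$, $E=\{0,1,\dots,N\}$, and let $Q$ be the birth–death matrix on $E$ with $q_{00}=-b_0$, $q_{01}=b_0$; $q_{n,n-1}=a_n$, $q_{nn}=-(a_n+b_n)$, $q_{n,n+1}=b_n$ for $1\le n\le N-1$; $q_{N,N-1}=a_N$, $q_{NN}=-(a_N+b_N)$; all other entries $0$; where $a_i>0$ $(1\le i\le N)$ and $b_i>0$ $(0\le i\le N)$. Let $\lambda_0=\lambda_{\min}(-Q)>0$ be the minimal eigenvalue of $-Q$. Let $f_1$ be any vector with $f_1(i)>0$ for all $i\in E$ and define successively $f_{n+1}=f_n\,I\!I(f_n)$ (componentwise product), $n\ge1$. Then $f_{n+1}=(-Q)^{-1}f_n=(-Q)^{-n}f_1$ for all $n\ge1$; moreover, for every $i\in E$, $$\lim_{n\to\infty}I\!I(f_n)(i)=\frac1{\lambda_0},$$ and consequently $\lim_{n\to\infty}\min_{i\in E}I\!I(f_n)(i)=1/\lambda_0=\lim_{n\to\infty}\max_{i\in E}I\!I(f_n)(i)$.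
   Context: Define $\mu_0=1$ and $\mu_n=\frac{b_0b_1\cdots b_{n-1}}{a_1a_2\cdots a_n}$ for $1\le n\le N$. For a positive function $f$ on $E$ define $$I\!I(f)(i)=\frac1{f_i}\sum_{j=i}^N\frac1{\mu_jb_j}\sum_{k=0}^j\mu_kf_k,\qquad i\in E.$$ *)

theory Defs
  imports "Jordan_Normal_Form.Char_Poly" "Jordan_Normal_Form.Matrix"
begin

definition bd_Q :: "(nat \<Rightarrow> real) \<Rightarrow> (nat \<Rightarrow> real) \<Rightarrow> nat \<Rightarrow> real mat" where
  "bd_Q a b N = mat (N+1) (N+1) (\<lambda>(i,j).
      if i = 0 then (if j = 0 then - b 0 else if j = 1 then b 0 else 0)
      else (if j + 1 = i then a i
            else if j = i then - (a i + b i)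
            else if j = i + 1 \<and> i < N then b i
            else 0))"

definition bd_mu :: "(nat \<Rightarrow> real) \<Rightarrow> (nat \<Rightarrow> real) \<Rightarrow> nat \<Rightarrow> real" where
  "bd_mu a b n = (\<Prod>k<n. b k) / (\<Prod>k\<in>{1..n}. a k)"

definition bd_II :: "(nat \<Rightarrow> real) \<Rightarrow> (nat \<Rightarrow> real) \<Rightarrow> nat \<Rightarrow> (nat \<Rightarrow> real) \<Rightarrow> nat \<Rightarrow> real" where
  "bd_II a b N f i = 1 / f i *
     (\<Sum>j=i..N. 1 / (bd_mu a b j * b j) * (\<Sum>k=0..j. bd_mu a b k * f k))"

text \<open>Minimal eigenvalue of a square real matrix (all eigenvalues of -Q are real).\<close>
definition lambda_min :: "real mat \<Rightarrow> real" where
  "lambda_min A = Min {k. eigenvalue A k}"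

end

theory Submission
  imports Defs
begin


lemma avg_bounds:
  fixes w u :: "nat \<Rightarrow> real"
  assumes fin: "finite I" and wd: "\<And>k. k \<in> I \<Longrightarrow> w k \<ge> \<delta>" and d0: "\<delta> \<ge> 0"
    and ws: "sum w I = 1" and k0: "k0 \<in> I" and k1: "k1 \<in> I"
    and bnd: "\<And>k. k \<in> I \<Longrightarrow> u k0 \<le> u k \<and> u k \<le> u k1"
  shows "u k0 + \<delta> * (u k1 - u k0) \<le> (\<Sum>k\<in>I. w k * u k)"
    and "(\<Sum>k\<in>I. w k * u k) \<le> u k1 - \<delta> * (u k1 - u k0)"
proof -
  have w0: "\<And>k. k \<in> I \<Longrightarrow> w k \<ge> 0" using wd d0 by force
  have "(\<Sum>k\<in>I. w k * u k) - u k0 = (\<Sum>k\<in>I. w k * (u k - u k0))"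
    using ws by (simp add: right_diff_distrib sum_subtractf sum_distrib_right[symmetric])
  also have "\<dots> \<ge> w k1 * (u k1 - u k0)"
    by (rule member_le_sum[OF k1 _ fin]) (use w0 bnd in auto)
  finally have 1: "(\<Sum>k\<in>I. w k * u k) - u k0 \<ge> w k1 * (u k1 - u k0)" .
  have "w k1 * (u k1 - u k0) \<ge> \<delta> * (u k1 - u k0)"
    using wd[OF k1] bnd[OF k1] by (intro mult_right_mono) auto
  with 1 show "u k0 + \<delta> * (u k1 - u k0) \<le> (\<Sum>k\<in>I. w k * u k)" by linarith
  have "u k1 - (\<Sum>k\<in>I. w k * u k) = (\<Sum>k\<in>I. w k * (u k1 - u k))"
    using ws by (simp add: right_diff_distrib sum_subtractf sum_distrib_right[symmetric])
  also have "\<dots> \<ge> w k0 * (u k1 - u k0)"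
    by (rule member_le_sum[OF k0 _ fin]) (use w0 bnd in auto)
  finally have 2: "u k1 - (\<Sum>k\<in>I. w k * u k) \<ge> w k0 * (u k1 - u k0)" .
  have "w k0 * (u k1 - u k0) \<ge> \<delta> * (u k1 - u k0)"
    using wd[OF k0] bnd[OF k1] bnd[OF k0] by (intro mult_right_mono) auto
  with 2 show "(\<Sum>k\<in>I. w k * u k) \<le> u k1 - \<delta> * (u k1 - u k0)" by linarith
qed

lemma geom_cauchy_conv:
  fixes x :: "nat \<Rightarrow> real"
  assumes "\<And>n. \<bar>x (Suc n) - x n\<bar> \<le> K * \<theta> ^ n" and "0 \<le> \<theta>" "\<theta> < 1"
  shows "convergent x"
proof -
  have "summable (\<lambda>n. K * \<theta> ^ n)"
    using assms by (intro summable_mult summable_geometric) auto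
  hence s: "summable (\<lambda>n. x (Suc n) - x n)"
    by (rule summable_comparison_test'[where N=0]) (use assms(1) in auto)
  hence "(\<lambda>n. \<Sum>k<n. x (Suc k) - x k) \<longlonglongrightarrow> suminf (\<lambda>n. x (Suc n) - x n)"
    by (rule summable_LIMSEQ)
  hence "(\<lambda>n. x n - x 0) \<longlonglongrightarrow> suminf (\<lambda>n. x (Suc n) - x n)"
    by (simp add: sum_lessThan_telescope)
  hence "(\<lambda>n. x n - x 0 + x 0) \<longlonglongrightarrow> suminf (\<lambda>n. x (Suc n) - x n) + x 0"
    by (intro tendsto_add) auto
  thus ?thesis unfolding convergent_def by auto
qed

locale piter =
  fixes N :: nat and G :: "nat \<Rightarrow> nat \<Rightarrow> real" and F :: "nat \<Rightarrow> nat \<Rightarrow> real"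
  assumes N1: "N \<ge> 1"
    and Gpos: "\<And>i k. i \<le> N \<Longrightarrow> k \<le> N \<Longrightarrow> G i k > 0"
    and F0: "\<And>i. i \<le> N \<Longrightarrow> F 0 i > 0"
    and Frec: "\<And>n i. i \<le> N \<Longrightarrow> F (Suc n) i = (\<Sum>k=0..N. G i k * F n k)"
begin

definition "r n i = F (Suc n) i / F n i"
definition "gmin = Min ((\<lambda>(i,k). G i k) ` ({0..N} \<times> {0..N}))"
definition "gmax = Max ((\<lambda>(i,k). G i k) ` ({0..N} \<times> {0..N}))"
definition "C = gmax / gmin"
definition "\<delta> = gmin / (gmax * (N+1) * C)"
definition "mn n = Min (r n ` {0..N})"
definition "Mx n = Max (r n ` {0..N})"
definition "osc n = Mx n - mn n"
definition "\<theta> = 1 - \<delta>"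
definition "w n i k = G i k * F n k / F (Suc n) i"

lemma Fpos: "i \<le> N \<Longrightarrow> F n i > 0"
proof (induction n arbitrary: i)
  case 0 thus ?case using F0 by auto
next
  case (Suc n)
  have "(\<Sum>k=0..N. G i k * F n k) > 0"
    by (rule sum_pos) (use Suc Gpos in auto)
  thus ?case using Frec Suc by simp
qed

lemma gbounds: "i \<le> N \<Longrightarrow> k \<le> N \<Longrightarrow> gmin \<le> G i k \<and> G i k \<le> gmax"
  unfolding gmin_def gmax_def
  by (auto intro!: Min_le Max_ge image_eqI[where x="(i,k)"])

lemma gmin_pos: "gmin > 0"
  using gbounds[of 0 0] Gpos[of 0 0] unfolding gmin_def
  by (subst Min_gr_iff) (auto intro!: Gpos)

lemma gmax_pos: "gmax > 0" using gmin_pos gbounds[of 0 0] by linarith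

lemma C_ge1: "C \<ge> 1" unfolding C_def using gmin_pos gbounds[of 0 0] by simp

lemma ratio: assumes "i \<le> N" "k \<le> N" shows "F (Suc n) i \<le> C * F (Suc n) k"
proof -
  let ?S = "\<Sum>j=0..N. F n j"
  have "F (Suc n) i \<le> (\<Sum>j=0..N. gmax * F n j)"
    unfolding Frec[OF assms(1)]
    by (rule sum_mono) (use gbounds Fpos assms in \<open>auto intro!: mult_right_mono\<close>)
  hence 1: "F (Suc n) i \<le> gmax * ?S" by (simp add: sum_distrib_left)
  have "F (Suc n) k \<ge> (\<Sum>j=0..N. gmin * F n j)"
    unfolding Frec[OF assms(2)]
    by (rule sum_mono) (use gbounds Fpos assms in \<open>auto intro!: mult_right_mono\<close>)
  hence 2: "F (Suc n) k \<ge> gmin * ?S" by (simp add: sum_distrib_left)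
  have "C * F (Suc n) k \<ge> C * (gmin * ?S)"
    using 2 C_ge1 by (intro mult_left_mono) auto
  also have "C * (gmin * ?S) = gmax * ?S" unfolding C_def using gmin_pos by simp
  finally show ?thesis using 1 by linarith
qed

lemma rpos: "i \<le> N \<Longrightarrow> r n i > 0" unfolding r_def using Fpos by auto

lemma wsum: "i \<le> N \<Longrightarrow> (\<Sum>k=0..N. w n i k) = 1"
  unfolding w_def using Fpos[of i "Suc n"]
  by (simp add: sum_divide_distrib[symmetric] Frec[symmetric])

lemma r_avg: assumes "i \<le> N" shows "r (Suc n) i = (\<Sum>k=0..N. w n i k * r n k)"
proof -
  have "(\<Sum>k=0..N. w n i k * r n k) = (\<Sum>k=0..N. G i k * F (Suc n) k / F (Suc n) i)"
  proof (rule sum.cong)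
    fix k assume "k \<in> {0..N}"
    hence "F n k > 0" using Fpos by auto
    thus "w n i k * r n k = G i k * F (Suc n) k / F (Suc n) i" by (simp add: w_def r_def)
  qed simp
  also have "\<dots> = F (Suc (Suc n)) i / F (Suc n) i"
    by (simp add: sum_divide_distrib[symmetric] Frec[OF assms])
  finally show ?thesis unfolding r_def by simp
qed

lemma w_nonneg: "i \<le> N \<Longrightarrow> k \<le> N \<Longrightarrow> w n i k \<ge> 0"
  unfolding w_def using Fpos Gpos by (auto intro!: divide_nonneg_pos mult_nonneg_nonneg less_imp_le)

lemma delta_eq: "\<delta> * (gmax * (N+1) * C) = gmin"
  unfolding \<delta>_def using gmax_pos C_ge1 by simp

lemma delta_bounds: "0 < \<delta>" "\<delta> \<le> 1"
proof -
  have p: "gmax * (N+1) * C > 0" using gmax_pos C_ge1 by simp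
  thus "0 < \<delta>" unfolding \<delta>_def using gmin_pos by simp
  have "gmin \<le> gmax * (N+1) * C"
  proof -
    have "gmin \<le> gmax" using gbounds[of 0 0] by simp
    also have "gmax \<le> gmax * ((N+1) * C)"
      using gmax_pos C_ge1 by (intro mult_le_cancel_left1[THEN iffD2] disjI1 conjI)
        (auto intro: order.trans[OF C_ge1] simp: mult_ge1_I)
    finally show ?thesis by (simp add: mult.assoc)
  qed
  thus "\<delta> \<le> 1" unfolding \<delta>_def using p by simp
qed

lemma w_lower: assumes "i \<le> N" "k \<le> N" shows "w (Suc n) i k \<ge> \<delta>"
proof -
  have "F (Suc (Suc n)) i \<le> (\<Sum>j=0..N. gmax * F (Suc n) j)"
    unfolding Frec[OF assms(1), of "Suc n"]
    by (rule sum_mono) (use gbounds Fpos assms in \<open>auto intro!: mult_right_mono\<close>)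
  also have "\<dots> = gmax * (\<Sum>j=0..N. F (Suc n) j)" by (simp add: sum_distrib_left)
  also have "(\<Sum>j=0..N. F (Suc n) j) \<le> of_nat (card {0..N}) * (C * F (Suc n) k)"
    by (rule sum_bounded_above) (use ratio assms in auto)
  hence "gmax * (\<Sum>j=0..N. F (Suc n) j) \<le> gmax * ((N+1) * (C * F (Suc n) k))"
    using gmax_pos by (intro mult_left_mono) auto
  finally have 1: "F (Suc (Suc n)) i \<le> gmax * ((N+1) * (C * F (Suc n) k))" .
  have "\<delta> * F (Suc (Suc n)) i \<le> \<delta> * (gmax * ((N+1) * (C * F (Suc n) k)))"
    using 1 delta_bounds by (intro mult_left_mono) auto
  also have "\<dots> = (\<delta> * (gmax * (N+1) * C)) * F (Suc n) k" by (simp add: algebra_simps)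
  also have "\<dots> = gmin * F (Suc n) k" using delta_eq by simp
  also have "\<dots> \<le> G i k * F (Suc n) k"
    using gbounds[OF assms] Fpos[OF assms(2), of "Suc n"] by (intro mult_right_mono) auto
  finally show ?thesis unfolding w_def using Fpos[OF assms(1), of "Suc (Suc n)"]
    by (simp add: le_divide_eq)
qed

lemma mn_Mx: "i \<le> N \<Longrightarrow> mn n \<le> r n i \<and> r n i \<le> Mx n"
  unfolding mn_def Mx_def by (auto intro!: Min_le Max_ge)

lemma mn_in: "\<exists>k\<le>N. r n k = mn n"
proof -
  have "mn n \<in> r n ` {0..N}" unfolding mn_def by (intro Min_in) auto
  thus ?thesis by auto
qed

lemma Mx_in: "\<exists>k\<le>N. r n k = Mx n"
proof -
  have "Mx n \<in> r n ` {0..N}" unfolding Mx_def by (intro Max_in) auto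
  thus ?thesis by auto
qed

lemma step_gen:
  assumes "\<And>k. k \<le> N \<Longrightarrow> w n i k \<ge> d" "d \<ge> 0" "i \<le> N"
  shows "mn n + d * (Mx n - mn n) \<le> r (Suc n) i \<and> r (Suc n) i \<le> Mx n - d * (Mx n - mn n)"
proof -
  obtain k0 where k0: "k0 \<le> N" "r n k0 = mn n" using mn_in by blast
  obtain k1 where k1: "k1 \<le> N" "r n k1 = Mx n" using Mx_in by blast
  have b: "\<And>k. k \<in> {0..N} \<Longrightarrow> r n k0 \<le> r n k \<and> r n k \<le> r n k1"
    using k0 k1 mn_Mx by auto
  note ab = avg_bounds[of "{0..N}" d "w n i" k0 k1 "r n", OF _ _ assms(2) wsum[OF assms(3)] _ _ b]
  show ?thesis using ab k0 k1 assms(1) unfolding r_avg[OF assms(3)] by auto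
qed

lemma mn_mono: "mn n \<le> mn (Suc n)"
proof -
  obtain k where "k \<le> N" "r (Suc n) k = mn (Suc n)" using mn_in by blast
  thus ?thesis using step_gen[where n=n and i=k and d=0] w_nonneg by auto
qed

lemma Mx_mono: "Mx (Suc n) \<le> Mx n"
proof -
  obtain k where "k \<le> N" "r (Suc n) k = Mx (Suc n)" using Mx_in by blast
  thus ?thesis using step_gen[where n=n and i=k and d=0] w_nonneg by auto
qed

lemma osc_nonneg: "osc n \<ge> 0" unfolding osc_def using mn_Mx[of 0 n] by auto

lemma osc_step: "osc (Suc (Suc n)) \<le> \<theta> * osc (Suc n)"
proof -
  obtain k0 where k0: "k0 \<le> N" "r (Suc (Suc n)) k0 = mn (Suc (Suc n))" using mn_in by blast
  obtain k1 where k1: "k1 \<le> N" "r (Suc (Suc n)) k1 = Mx (Suc (Suc n))" using Mx_in by blast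
  have a: "mn (Suc n) + \<delta> * osc (Suc n) \<le> mn (Suc (Suc n))"
    using step_gen[where n="Suc n" and i=k0 and d=\<delta>] w_lower delta_bounds k0 unfolding osc_def by auto
  have b: "Mx (Suc (Suc n)) \<le> Mx (Suc n) - \<delta> * osc (Suc n)"
    using step_gen[where n="Suc n" and i=k1 and d=\<delta>] w_lower delta_bounds k1 unfolding osc_def by auto
  have "\<delta> * osc (Suc n) \<ge> 0" using delta_bounds osc_nonneg by simp
  thus ?thesis using a b unfolding osc_def \<theta>_def by (simp add: algebra_simps)
qed

lemma osc_bound: "osc (Suc n) \<le> osc 1 * \<theta> ^ n"
proof (induction n)
  case 0 thus ?case by simp
next
  case (Suc n)
  have "osc (Suc (Suc n)) \<le> \<theta> * osc (Suc n)" by (rule osc_step)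
  also have "\<dots> \<le> \<theta> * (osc 1 * \<theta> ^ n)"
    using Suc delta_bounds by (intro mult_left_mono) (auto simp: \<theta>_def)
  finally show ?case by (simp add: algebra_simps)
qed

lemma theta_bounds: "0 \<le> \<theta>" "\<theta> < 1" using delta_bounds unfolding \<theta>_def by auto

lemma mn_pos: "mn n > 0"
  using mn_in[of n] rpos by metis

lemma mn_ge0: "mn 0 \<le> mn n"
  using incseq_SucI[of mn, OF mn_mono] unfolding incseq_def by auto

lemma Mx_le0: "Mx n \<le> Mx 0"
  using decseq_SucI[of Mx, OF Mx_mono] unfolding decseq_def by auto

lemma limits: obtains L where "L > 0" "mn \<longlonglongrightarrow> L" "Mx \<longlonglongrightarrow> L"
  "\<And>i. i \<le> N \<Longrightarrow> (\<lambda>n. r n i) \<longlonglongrightarrow> L"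
proof -
  have "\<forall>i. mn i \<le> Mx 0"
  proof
    fix i show "mn i \<le> Mx 0" using mn_Mx[of 0 i] Mx_le0[of i] by linarith
  qed
  then obtain L where L: "mn \<longlonglongrightarrow> L" "\<forall>i. mn i \<le> L"
    using incseq_convergent[of mn "Mx 0"] incseq_SucI[of mn, OF mn_mono] by blast
  have Lpos: "L > 0" using spec[OF L(2), of 0] mn_pos[of 0] by linarith
  have t0: "(\<lambda>n. osc 1 * \<theta> ^ n) \<longlonglongrightarrow> 0"
    using theta_bounds by (auto intro!: tendsto_eq_intros LIMSEQ_power_zero)
  have "(\<lambda>n. osc (n + 1)) \<longlonglongrightarrow> 0"
    by (rule real_tendsto_sandwich[OF _ _ tendsto_const t0])
      (use osc_nonneg osc_bound in auto)
  hence oz: "osc \<longlonglongrightarrow> 0" by (rule LIMSEQ_offset)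
  have "(\<lambda>n. mn n + osc n) \<longlonglongrightarrow> L + 0" by (intro tendsto_add L oz)
  hence Mx: "Mx \<longlonglongrightarrow> L" unfolding osc_def by simp
  have "\<And>i. i \<le> N \<Longrightarrow> (\<lambda>n. r n i) \<longlonglongrightarrow> L"
    by (rule real_tendsto_sandwich[OF _ _ L(1) Mx]) (use mn_Mx in auto)
  thus ?thesis using that Lpos L(1) Mx by blast
qed

definition "s n i = F (Suc n) i / F (Suc n) 0"

lemma s_bounds: "i \<le> N \<Longrightarrow> 1 / C \<le> s n i \<and> s n i \<le> C"
  using ratio[of i 0 n] ratio[of 0 i n] Fpos[of 0 "Suc n"] Fpos[of i "Suc n"] C_ge1
  unfolding s_def by (auto simp: divide_simps mult.commute)

lemma s_rec: "i \<le> N \<Longrightarrow> s (Suc n) i = s n i * (r (Suc n) i / r (Suc n) 0)"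
  using Fpos[of 0 "Suc n"] Fpos[of i "Suc n"] Fpos[of 0 "Suc (Suc n)"] Fpos[of i "Suc (Suc n)"]
  unfolding s_def r_def by (simp add: field_simps)

lemma s_diff: assumes "i \<le> N"
  shows "\<bar>s (Suc n) i - s n i\<bar> \<le> (C * osc 1 / mn 0) * \<theta> ^ n"
proof -
  have r0: "r (Suc n) 0 \<ge> mn 0" using mn_Mx[of 0 "Suc n"] mn_ge0[of "Suc n"] by simp
  have m0: "mn 0 > 0" by (rule mn_pos)
  have d: "\<bar>r (Suc n) i - r (Suc n) 0\<bar> \<le> osc (Suc n)"
    using mn_Mx[of i "Suc n"] mn_Mx[of 0 "Suc n"] assms unfolding osc_def by auto
  have sp: "0 \<le> s n i" "s n i \<le> C" using s_bounds[OF assms, of n] C_ge1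
    by (auto intro: order.trans[rotated])
  have "s (Suc n) i - s n i = s n i * (r (Suc n) i - r (Suc n) 0) / r (Suc n) 0"
    using s_rec[OF assms, of n] r0 m0 by (simp add: field_simps)
  hence "\<bar>s (Suc n) i - s n i\<bar> = s n i * \<bar>r (Suc n) i - r (Suc n) 0\<bar> / r (Suc n) 0"
    using sp r0 m0 by (simp add: abs_mult)
  also have "\<dots> \<le> C * osc (Suc n) / mn 0"
    using sp d r0 m0 osc_nonneg[of "Suc n"]
    by (intro frac_le mult_mono) auto
  also have "\<dots> \<le> C * (osc 1 * \<theta> ^ n) / mn 0"
    using osc_bound[of n] C_ge1 m0 by (intro divide_right_mono mult_left_mono) auto
  finally show ?thesis by simp
qed

lemma s_eig: "i \<le> N \<Longrightarrow> (\<Sum>k=0..N. G i k * s n k) = s (Suc n) i * r (Suc n) 0"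
proof -
  assume i: "i \<le> N"
  have "(\<Sum>k=0..N. G i k * s n k) = (\<Sum>k=0..N. G i k * F (Suc n) k) / F (Suc n) 0"
    unfolding s_def by (simp add: sum_divide_distrib)
  also have "\<dots> = F (Suc (Suc n)) i / F (Suc n) 0" using Frec[OF i] by simp
  finally show ?thesis
    using Fpos[of 0 "Suc n"] Fpos[of 0 "Suc (Suc n)"] unfolding s_def r_def by simp
qed

theorem piter_main:
  "\<exists>L \<sigma>. L > 0 \<and> (\<forall>i\<le>N. \<sigma> i > 0) \<and> (\<forall>i\<le>N. (\<Sum>k=0..N. G i k * \<sigma> k) = L * \<sigma> i)
     \<and> (\<forall>i\<le>N. (\<lambda>n. F (Suc n) i / F n i) \<longlonglongrightarrow> L)
     \<and> (\<lambda>n. Min ((\<lambda>i. F (Suc n) i / F n i) ` {0..N})) \<longlonglongrightarrow> L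
     \<and> (\<lambda>n. Max ((\<lambda>i. F (Suc n) i / F n i) ` {0..N})) \<longlonglongrightarrow> L"
proof -
  obtain L where L: "L > 0" "mn \<longlonglongrightarrow> L" "Mx \<longlonglongrightarrow> L"
    "\<And>i. i \<le> N \<Longrightarrow> (\<lambda>n. r n i) \<longlonglongrightarrow> L" using limits by blast
  define \<sigma> where "\<sigma> i = lim (\<lambda>n. s n i)" for i
  have sc: "(\<lambda>n. s n i) \<longlonglongrightarrow> \<sigma> i" if i: "i \<le> N" for i
  proof -
    have "convergent (\<lambda>n. s n i)"
      by (rule geom_cauchy_conv[OF s_diff[OF i] theta_bounds])
    thus ?thesis unfolding \<sigma>_def by (simp add: convergent_LIMSEQ_iff)
  qed
  have spos: "\<sigma> i > 0" if i: "i \<le> N" for i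
  proof -
    have "1 / C \<le> \<sigma> i"
      by (rule LIMSEQ_le_const[OF sc[OF i]]) (use s_bounds[OF i] in auto)
    moreover have "1 / C > 0" using C_ge1 by simp
    ultimately show ?thesis by linarith
  qed
  have eig: "(\<Sum>k=0..N. G i k * \<sigma> k) = L * \<sigma> i" if i: "i \<le> N" for i
  proof -
    have "(\<lambda>n. \<Sum>k=0..N. G i k * s n k) \<longlonglongrightarrow> (\<Sum>k=0..N. G i k * \<sigma> k)"
      by (intro tendsto_sum tendsto_mult_left sc) auto
    moreover have "(\<lambda>n. s (Suc n) i * r (Suc n) 0) \<longlonglongrightarrow> \<sigma> i * L"
      by (intro tendsto_mult LIMSEQ_Suc sc i L(4)) auto
    ultimately show ?thesis using s_eig[OF i] LIMSEQ_unique by (simp add: mult.commute)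
  qed
  show ?thesis
    apply (rule exI[of _ L], rule exI[of _ \<sigma>])
    using L spos eig unfolding mn_def Mx_def r_def by auto
qed

end


locale bd =
  fixes a b :: "nat \<Rightarrow> real" and N :: nat
  assumes N1: "N \<ge> 1"
    and a_pos: "\<And>i. 1 \<le> i \<Longrightarrow> i \<le> N \<Longrightarrow> a i > 0"
    and b_pos: "\<And>i. i \<le> N \<Longrightarrow> b i > 0"
begin

abbreviation "mu \<equiv> bd_mu a b"
definition "Aent i j = (- bd_Q a b N) $$ (i,j)"
definition "dg i = (if i = 0 then b 0 else a i + b i)"
definition "Gm i k = mu k * (\<Sum>j=max i k..N. 1 / (mu j * b j))"

lemma mu0: "mu 0 = 1" by (simp add: bd_mu_def)

lemma mu_Suc: "mu (Suc n) = mu n * b n / a (Suc n)"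
  by (simp add: bd_mu_def)

lemma mu_pos: "k \<le> N \<Longrightarrow> mu k > 0"
  unfolding bd_mu_def using a_pos b_pos
  by (intro divide_pos_pos prod_pos) auto

lemma Aent_eq: assumes "i \<le> N" "j \<le> N"
  shows "Aent i j = (if j = i then dg i else 0) - (if j + 1 = i then a i else 0)
                    - (if j = i + 1 \<and> i < N then b i else 0)"
  using assms N1 unfolding Aent_def bd_Q_def dg_def by auto

lemma A_apply: assumes i: "i \<le> N"
  shows "(\<Sum>j=0..N. Aent i j * x j) = dg i * x i - (if 1 \<le> i then a i * x (i - 1) else 0)
            - (if i < N then b i * x (i + 1) else 0)"
proof -
  have "(\<Sum>j=0..N. Aent i j * x j) = (\<Sum>j=0..N. (if j = i then dg i * x j else 0)
     - (if j = i - 1 \<and> 1 \<le> i then a i * x j else 0) - (if j = i + 1 \<and> i < N then b i * x j else 0))"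
    by (rule sum.cong) (use i in \<open>auto simp: Aent_eq\<close>)
  also have "\<dots> = (\<Sum>j=0..N. (if j = i then dg i * x j else 0))
     - (\<Sum>j=0..N. (if j = i - 1 \<and> 1 \<le> i then a i * x j else 0))
     - (\<Sum>j=0..N. (if j = i + 1 \<and> i < N then b i * x j else 0))"
    by (simp add: sum_subtractf)
  also have "(\<Sum>j=0..N. (if j = i - 1 \<and> 1 \<le> i then a i * x j else 0))
      = (if 1 \<le> i then a i * x (i - 1) else 0)"
    using i by (cases "1 \<le> i") (simp_all add: sum.delta)
  also have "(\<Sum>j=0..N. (if j = i + 1 \<and> i < N then b i * x j else 0))
      = (if i < N then b i * x (i + 1) else 0)"
    using i by (cases "i < N") (simp_all add: sum.delta)
  finally show ?thesis using i by (simp add: sum.delta)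
qed

lemma G_swap: assumes i: "i \<le> N"
  shows "(\<Sum>k=0..N. Gm i k * f k) = (\<Sum>j=i..N. 1 / (mu j * b j) * (\<Sum>k=0..j. mu k * f k))"
proof -
  let ?c = "\<lambda>j. 1 / (mu j * b j)"
  have 1: "(\<Sum>j=max i k..N. ?c j) = (\<Sum>j=i..N. if k \<le> j then ?c j else 0)" for k
  proof -
    have eq: "{j \<in> {i..N}. k \<le> j} = {max i k..N}" by auto
    show ?thesis by (subst eq[symmetric]) (rule sum.inter_filter, simp)
  qed
  have 2: "(\<Sum>k=0..j. mu k * f k) = (\<Sum>k=0..N. if k \<le> j then mu k * f k else 0)" if "j \<le> N" for j
  proof -
    have eq: "{k \<in> {0..N}. k \<le> j} = {0..j}" using that by auto
    show ?thesis by (subst eq[symmetric]) (rule sum.inter_filter, simp)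
  qed
  have 3: "Gm i k * f k = (\<Sum>j=i..N. if k \<le> j then ?c j * (mu k * f k) else 0)" for k
    unfolding Gm_def 1 sum_distrib_left sum_distrib_right by (intro sum.cong) auto
  have "(\<Sum>k=0..N. Gm i k * f k) = (\<Sum>k=0..N. \<Sum>j=i..N. if k \<le> j then ?c j * (mu k * f k) else 0)"
    unfolding 3 ..
  also have "\<dots> = (\<Sum>j=i..N. \<Sum>k=0..N. if k \<le> j then ?c j * (mu k * f k) else 0)"
    by (rule sum.swap)
  also have "\<dots> = (\<Sum>j=i..N. ?c j * (\<Sum>k=0..j. mu k * f k))"
  proof (rule sum.cong)
    fix j assume "j \<in> {i..N}"
    hence "j \<le> N" by auto
    show "(\<Sum>k=0..N. if k \<le> j then ?c j * (mu k * f k) else 0) = ?c j * (\<Sum>k=0..j. mu k * f k)"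
      unfolding 2[OF \<open>j \<le> N\<close>] sum_distrib_left by (intro sum.cong) auto
  qed simp
  finally show ?thesis .
qed

lemma A_G_ident: assumes i: "i \<le> N"
  shows "(\<Sum>j=0..N. Aent i j * (\<Sum>k=0..N. Gm j k * f k)) = f i"
proof -
  define S where "S j = (\<Sum>k=0..j. mu k * f k)" for j
  define g where "g j = (\<Sum>l=j..N. 1 / (mu l * b l) * S l)" for j
  have gj: "(\<Sum>k=0..N. Gm j k * f k) = g j" if "j \<le> N" for j
    unfolding g_def S_def by (rule G_swap[OF that])
  have "(\<Sum>j=0..N. Aent i j * (\<Sum>k=0..N. Gm j k * f k)) = (\<Sum>j=0..N. Aent i j * g j)"
    by (rule sum.cong) (auto simp: gj)
  also have "\<dots> = dg i * g i - (if 1 \<le> i then a i * g (i - 1) else 0)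
            - (if i < N then b i * g (i + 1) else 0)" by (rule A_apply[OF i])
  finally have L: "(\<Sum>j=0..N. Aent i j * (\<Sum>k=0..N. Gm j k * f k)) = \<dots>" .
  have gdiff: "g j - g (Suc j) = S j / (mu j * b j)" if "j < N" for j
    unfolding g_def using that by (subst sum.atLeast_Suc_atMost) auto
  have gN: "g N = S N / (mu N * b N)" unfolding g_def by simp
  have tail: "b i * g i - (if i < N then b i * g (i + 1) else 0) = S i / mu i"
  proof (cases "i < N")
    case True
    have "b i * g i - b i * g (i + 1) = b i * (S i / (mu i * b i))"
      using gdiff[OF True] by (simp add: right_diff_distrib[symmetric])
    thus ?thesis using True b_pos[of i] i by simp
  next
    case False
    hence "i = N" using i by simp
    thus ?thesis using gN b_pos[of N] by simp
  qed
  show ?thesis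
  proof (cases i)
    case 0
    have "S 0 = f 0" unfolding S_def by (simp add: mu0)
    thus ?thesis using L tail N1 unfolding 0 by (simp add: dg_def mu0)
  next
    case (Suc m)
    have mN: "m < N" using i Suc by simp
    have "dg i * g i - (if 1 \<le> i then a i * g (i - 1) else 0) - (if i < N then b i * g (i + 1) else 0)
        = (b i * g i - (if i < N then b i * g (i + 1) else 0)) - a i * (g m - g (Suc m))"
      unfolding Suc dg_def by (simp add: algebra_simps)
    also have "\<dots> = S i / mu i - a i * (S m / (mu m * b m))" using tail gdiff[OF mN] Suc by simp
    also have "S i = S m + mu i * f i" unfolding S_def Suc by simp
    also have "a i * (S m / (mu m * b m)) = S m / mu i"
      using mu_pos[of m] b_pos[of m] a_pos[of i] mN Suc unfolding Suc mu_Suc by (simp add: field_simps)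
    finally have E: "dg i * g i - (if 1 \<le> i then a i * g (i - 1) else 0) - (if i < N then b i * g (i + 1) else 0)
        = (S m + mu i * f i) / mu i - S m / mu i" .
    have "(S m + mu i * f i) / mu i - S m / mu i = f i"
      using mu_pos[of i] i by (simp add: field_simps)
    with E L show ?thesis by simp
  qed
qed

definition "Gmat = mat (N+1) (N+1) (\<lambda>(i,k). Gm i k)"
abbreviation "Am \<equiv> - bd_Q a b N"

lemma Am_carrier: "Am \<in> carrier_mat (N+1) (N+1)" unfolding bd_Q_def by auto
lemma Gmat_carrier: "Gmat \<in> carrier_mat (N+1) (N+1)" unfolding Gmat_def by auto

lemma Am_mult_vec: assumes "i \<le> N" shows "(Am *\<^sub>v vec (Suc N) x) $ i = (\<Sum>j=0..N. Aent i j * x j)"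
  using assms Am_carrier unfolding Aent_def
  by (auto simp: scalar_prod_def atLeastLessThanSuc_atLeastAtMost sum_negf intro!: sum.cong)

lemma Gmat_mult_vec: assumes "i \<le> N" shows "(Gmat *\<^sub>v vec (Suc N) x) $ i = (\<Sum>j=0..N. Gm i j * x j)"
  using assms unfolding Gmat_def
  by (auto simp: scalar_prod_def atLeastLessThanSuc_atLeastAtMost sum_negf intro!: sum.cong)

lemma AG: "Am * Gmat = 1\<^sub>m (N+1)"
proof (rule eq_matI)
  fix i k assume ik: "i < dim_row (1\<^sub>m (N+1))" "k < dim_col (1\<^sub>m (N+1))"
  hence ik': "i \<le> N" "k \<le> N" by auto
  have "(Am * Gmat) $$ (i,k) = (\<Sum>j=0..N. Aent i j * Gm j k)"
    using ik Am_carrier Gmat_carrier unfolding Aent_def Gmat_def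
    by (auto simp: scalar_prod_def atLeastLessThanSuc_atLeastAtMost sum_negf intro!: sum.cong)
  also have "\<dots> = (\<Sum>j=0..N. Aent i j * (\<Sum>l=0..N. Gm j l * (if l = k then 1 else 0)))"
    using ik' by (intro sum.cong) (auto simp: if_distrib sum.delta cong: if_cong)
  also have "\<dots> = (if i = k then 1 else 0)" by (rule A_G_ident[OF ik'(1)])
  finally show "(Am * Gmat) $$ (i,k) = 1\<^sub>m (N+1) $$ (i,k)" using ik by simp
qed (use Am_carrier Gmat_carrier in auto)

lemma GA: "Gmat * Am = 1\<^sub>m (N+1)"
  by (rule mat_mult_left_right_inverse[OF Am_carrier Gmat_carrier AG])

lemma Gm_pos: "i \<le> N \<Longrightarrow> k \<le> N \<Longrightarrow> Gm i k > 0"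
  unfolding Gm_def using mu_pos b_pos
  by (intro mult_pos_pos sum_pos) auto

lemma eig_nonneg:
  assumes xe: "\<And>i. i \<le> N \<Longrightarrow> (\<Sum>j=0..N. Aent i j * x j) = k * x i"
    and nz: "j \<le> N" "x j \<noteq> 0"
  shows "k \<ge> 0"
proof -
  define t where "t = Max ((\<lambda>i. \<bar>x i\<bar>) ` {0..N})"
  have "t \<in> (\<lambda>i. \<bar>x i\<bar>) ` {0..N}" unfolding t_def by (intro Max_in) auto
  then obtain i0 where i0: "i0 \<le> N" "t = \<bar>x i0\<bar>" by auto
  have xb: "\<bar>x l\<bar> \<le> \<bar>x i0\<bar>" if "l \<le> N" for l
    unfolding i0(2)[symmetric] t_def using that by (intro Max_ge) auto
  have "\<bar>x j\<bar> > 0" using nz(2) by simp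
  hence "x i0 \<noteq> 0" using xb[OF nz(1)] by auto
  hence X: "x i0 * x i0 > 0" by (cases "x i0 > 0") (auto simp: zero_less_mult_iff)
  define X where "X = x i0 * x i0"
  have X0: "X > 0" using X unfolding X_def .
  have pb: "x l * x i0 \<le> X" if "l \<le> N" for l
  proof -
    have "x l * x i0 \<le> \<bar>x l\<bar> * \<bar>x i0\<bar>" by (metis abs_ge_self abs_mult)
    also have "\<dots> \<le> \<bar>x i0\<bar> * \<bar>x i0\<bar>" using xb[OF that] by (intro mult_right_mono) auto
    finally show ?thesis unfolding X_def by (simp add: abs_mult[symmetric])
  qed
  have T1: "(if 1 \<le> i0 then a i0 * (x (i0 - 1) * x i0) else 0) \<le> (if 1 \<le> i0 then a i0 * X else 0)"
    using pb[of "i0 - 1"] a_pos[of i0] i0 by (auto intro!: mult_left_mono)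
  have T2: "(if i0 < N then b i0 * (x (i0 + 1) * x i0) else 0) \<le> (if i0 < N then b i0 * X else 0)"
    using pb[of "i0 + 1"] b_pos[of i0] i0 by (auto intro!: mult_left_mono)
  have co: "(if 1 \<le> i0 then a i0 else 0) + (if i0 < N then b i0 else 0) \<le> dg i0"
    using N1 b_pos[of i0] i0 unfolding dg_def by auto
  have E: "k * x i0 = dg i0 * x i0 - (if 1 \<le> i0 then a i0 * x (i0 - 1) else 0)
            - (if i0 < N then b i0 * x (i0 + 1) else 0)"
    using xe[OF i0(1)] A_apply[OF i0(1), of x] by simp
  have "k * X = (k * x i0) * x i0" unfolding X_def by (simp add: mult.assoc)
  also have "\<dots> = (dg i0 * x i0 - (if 1 \<le> i0 then a i0 * x (i0 - 1) else 0)
            - (if i0 < N then b i0 * x (i0 + 1) else 0)) * x i0" using E by simp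
  also have "\<dots> = dg i0 * X - (if 1 \<le> i0 then a i0 * (x (i0 - 1) * x i0) else 0)
       - (if i0 < N then b i0 * (x (i0 + 1) * x i0) else 0)"
    unfolding X_def by (cases "1 \<le> i0"; cases "i0 < N") (simp_all add: algebra_simps)
  also have "\<dots> \<ge> dg i0 * X - (if 1 \<le> i0 then a i0 * X else 0) - (if i0 < N then b i0 * X else 0)"
    using T1 T2 by linarith
  finally have "k * X \<ge> (dg i0 - (if 1 \<le> i0 then a i0 else 0) - (if i0 < N then b i0 else 0)) * X"
    by (cases "1 \<le> i0"; cases "i0 < N") (simp_all add: algebra_simps)
  moreover have "(dg i0 - (if 1 \<le> i0 then a i0 else 0) - (if i0 < N then b i0 else 0)) * X \<ge> 0"
    using co X0 by (intro mult_nonneg_nonneg) auto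
  ultimately have "k * X \<ge> 0" by linarith
  thus ?thesis using X unfolding X_def by (simp add: zero_le_mult_iff)
qed

end

lemma max_ratio:
  fixes G :: "nat \<Rightarrow> nat \<Rightarrow> real" and \<sigma> x :: "nat \<Rightarrow> real"
  assumes Gnn: "\<And>i k. i \<le> N \<Longrightarrow> k \<le> N \<Longrightarrow> G i k \<ge> 0"
    and sp: "\<And>i. i \<le> N \<Longrightarrow> \<sigma> i > 0"
    and eig: "\<And>i. i \<le> N \<Longrightarrow> (\<Sum>k=0..N. G i k * \<sigma> k) = L * \<sigma> i"
    and xe: "\<And>i. i \<le> N \<Longrightarrow> (\<Sum>k=0..N. G i k * x k) = \<mu> * x i"
    and nz: "j \<le> N" "x j \<noteq> 0"
  shows "\<bar>\<mu>\<bar> \<le> L"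
proof -
  define t where "t = Max ((\<lambda>i. \<bar>x i\<bar> / \<sigma> i) ` {0..N})"
  have "t \<in> (\<lambda>i. \<bar>x i\<bar> / \<sigma> i) ` {0..N}" unfolding t_def by (intro Max_in) auto
  then obtain i0 where i0: "i0 \<le> N" "t = \<bar>x i0\<bar> / \<sigma> i0" by auto
  have tge: "\<bar>x k\<bar> / \<sigma> k \<le> t" if "k \<le> N" for k
    unfolding t_def using that by (intro Max_ge) auto
  have tb: "\<bar>x k\<bar> \<le> t * \<sigma> k" if "k \<le> N" for k
    using tge[OF that] sp[OF that] by (simp add: divide_le_eq)
  have "\<bar>x j\<bar> / \<sigma> j > 0" using nz sp[OF nz(1)] by simp
  hence tpos: "t > 0" using tge[OF nz(1)] by linarith
  have xi0: "\<bar>x i0\<bar> = t * \<sigma> i0" using i0 sp[OF i0(1)] by simp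
  hence pos: "\<bar>x i0\<bar> > 0" using tpos sp[OF i0(1)] by simp
  have "\<bar>\<mu>\<bar> * \<bar>x i0\<bar> = \<bar>\<Sum>k=0..N. G i0 k * x k\<bar>" using xe[OF i0(1)] by (simp add: abs_mult)
  also have "\<dots> \<le> (\<Sum>k=0..N. \<bar>G i0 k * x k\<bar>)" by (rule sum_abs)
  also have "\<dots> \<le> (\<Sum>k=0..N. G i0 k * (t * \<sigma> k))"
  proof (rule sum_mono)
    fix k assume "k \<in> {0..N}"
    hence k: "k \<le> N" by simp
    have "\<bar>G i0 k * x k\<bar> = G i0 k * \<bar>x k\<bar>" using Gnn[OF i0(1) k] by (simp add: abs_mult)
    also have "\<dots> \<le> G i0 k * (t * \<sigma> k)" by (rule mult_left_mono[OF tb[OF k] Gnn[OF i0(1) k]])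
    finally show "\<bar>G i0 k * x k\<bar> \<le> G i0 k * (t * \<sigma> k)" .
  qed
  also have "\<dots> = t * (\<Sum>k=0..N. G i0 k * \<sigma> k)"
    by (simp add: sum_distrib_left mult_ac)
  also have "\<dots> = L * \<bar>x i0\<bar>" using eig[OF i0(1)] xi0 by simp
  finally show ?thesis using pos by simp
qed

theorem mainTheorem3:
  fixes a b :: "nat \<Rightarrow> real" and N :: nat and f :: "nat \<Rightarrow> nat \<Rightarrow> real"
  assumes N: "N \<ge> 1"
    and a_pos: "\<And>i. 1 \<le> i \<Longrightarrow> i \<le> N \<Longrightarrow> a i > 0"
    and b_pos: "\<And>i. i \<le> N \<Longrightarrow> b i > 0"
    and f1_pos: "\<And>i. i \<le> N \<Longrightarrow> f 1 i > 0"
    and f_rec: "\<And>n i. n \<ge> 1 \<Longrightarrow> i \<le> N \<Longrightarrow> f (n+1) i = f n i * bd_II a b N (f n) i"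
  shows "invertible_mat (- bd_Q a b N)
    \<and> (\<forall>B \<in> carrier_mat (N+1) (N+1). inverts_mat B (- bd_Q a b N) \<longrightarrow>
         (\<forall>n\<ge>1. vec (N+1) (f (n+1)) = B *\<^sub>v vec (N+1) (f n)
                \<and> vec (N+1) (f (n+1)) = (B ^\<^sub>m n) *\<^sub>v vec (N+1) (f 1)))
    \<and> (\<forall>i\<le>N. (\<lambda>n. bd_II a b N (f n) i) \<longlonglongrightarrow> 1 / lambda_min (- bd_Q a b N))
    \<and> (\<lambda>n. Min ((\<lambda>i. bd_II a b N (f n) i) ` {0..N})) \<longlonglongrightarrow> 1 / lambda_min (- bd_Q a b N)
    \<and> (\<lambda>n. Max ((\<lambda>i. bd_II a b N (f n) i) ` {0..N})) \<longlonglongrightarrow> 1 / lambda_min (- bd_Q a b N)"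
proof -
  interpret bd a b N using N a_pos b_pos by unfold_locales auto
  have inv: "invertible_mat Am"
    unfolding invertible_mat_def inverts_mat_def square_mat.simps
    using Am_carrier AG GA Gmat_carrier by (auto intro!: exI[of _ Gmat])
  have fstep: "f (n+1) i = (\<Sum>k=0..N. Gm i k * f n k)"
    if "n \<ge> 1" "\<And>k. k \<le> N \<Longrightarrow> f n k > 0" "i \<le> N" for n i
  proof -
    have "f (n+1) i = f n i * bd_II a b N (f n) i" by (rule f_rec[OF that(1) that(3)])
    also have "\<dots> = (\<Sum>j=i..N. 1 / (mu j * b j) * (\<Sum>k=0..j. mu k * f n k))"
      unfolding bd_II_def using that(2)[OF that(3)] by simp
    also have "\<dots> = (\<Sum>k=0..N. Gm i k * f n k)" by (rule G_swap[OF that(3), symmetric])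
    finally show ?thesis .
  qed
  have fpos': "\<forall>i\<le>N. f (Suc m) i > 0" for m
  proof (induction m)
    case 0 thus ?case using f1_pos by simp
  next
    case (Suc m)
    show ?case
    proof (intro allI impI)
      fix i assume i: "i \<le> N"
      have "f (Suc m + 1) i = (\<Sum>k=0..N. Gm i k * f (Suc m) k)"
        using fstep[of "Suc m" i] Suc i by auto
      also have "\<dots> > 0" by (rule sum_pos) (use Suc Gm_pos i in auto)
      finally show "f (Suc (Suc m)) i > 0" by simp
    qed
  qed
  have fpos: "f n i > 0" if "n \<ge> 1" "i \<le> N" for n i
    using fpos'[of "n - 1"] that by simp
  have frec': "f (Suc (Suc n)) i = (\<Sum>k=0..N. Gm i k * f (Suc n) k)" if "i \<le> N" for n i
    using fstep[of "Suc n" i] fpos that by simp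
  interpret P: piter N Gm "\<lambda>n. f (Suc n)"
    by unfold_locales (use N Gm_pos fpos frec' in auto)
  obtain L \<sigma> where L: "L > 0" "\<forall>i\<le>N. \<sigma> i > 0" "\<forall>i\<le>N. (\<Sum>k=0..N. Gm i k * \<sigma> k) = L * \<sigma> i"
     "\<forall>i\<le>N. (\<lambda>n. f (Suc (Suc n)) i / f (Suc n) i) \<longlonglongrightarrow> L"
     "(\<lambda>n. Min ((\<lambda>i. f (Suc (Suc n)) i / f (Suc n) i) ` {0..N})) \<longlonglongrightarrow> L"
     "(\<lambda>n. Max ((\<lambda>i. f (Suc (Suc n)) i / f (Suc n) i) ` {0..N})) \<longlonglongrightarrow> L"
    using P.piter_main by blast
  have vstep: "vec (N+1) (f (n+1)) = Gmat *\<^sub>v vec (N+1) (f n)" if "n \<ge> 1" for n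
  proof (rule eq_vecI)
    fix i assume "i < dim_vec (Gmat *\<^sub>v vec (N+1) (f n))"
    hence i: "i \<le> N" using Gmat_carrier by auto
    show "vec (N+1) (f (n+1)) $ i = (Gmat *\<^sub>v vec (N+1) (f n)) $ i"
      using Gmat_mult_vec[OF i, of "f n"] i fstep[of n i] fpos that by simp
  qed (use Gmat_carrier in simp)
  have vpow: "vec (N+1) (f (m+1+k)) = (Gmat ^\<^sub>m k) *\<^sub>v vec (N+1) (f (m+1))" for m k
  proof (induction k arbitrary: m)
    case 0 thus ?case using Gmat_carrier by simp
  next
    case (Suc k)
    have "(Gmat ^\<^sub>m Suc k) *\<^sub>v vec (N+1) (f (m+1)) = (Gmat ^\<^sub>m k) *\<^sub>v (Gmat *\<^sub>v vec (N+1) (f (m+1)))"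
      using Gmat_carrier by (simp add: assoc_mult_mat_vec[of _ "N+1" "N+1" _ "N+1"])
    also have "Gmat *\<^sub>v vec (N+1) (f (m+1)) = vec (N+1) (f (m+1+1))" using vstep[of "m+1"] by simp
    also have "(Gmat ^\<^sub>m k) *\<^sub>v \<dots> = vec (N+1) (f (m+1+1+k))" using Suc.IH[of "m+1"] by simp
    finally show ?case by (simp add: ac_simps)
  qed
  have part2: "\<forall>B \<in> carrier_mat (N+1) (N+1). inverts_mat B Am \<longrightarrow>
         (\<forall>n\<ge>1. vec (N+1) (f (n+1)) = B *\<^sub>v vec (N+1) (f n)
                \<and> vec (N+1) (f (n+1)) = (B ^\<^sub>m n) *\<^sub>v vec (N+1) (f 1))"
  proof (intro ballI impI allI)
    fix B and n :: nat assume B: "B \<in> carrier_mat (N+1) (N+1)" "inverts_mat B Am" and n: "n \<ge> 1"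
    have BA: "B * Am = 1\<^sub>m (N+1)" using B unfolding inverts_mat_def by simp
    have "B = B * (Am * Gmat)" using AG B by simp
    also have "\<dots> = (B * Am) * Gmat" using B Am_carrier Gmat_carrier by simp
    also have "\<dots> = Gmat" using BA Gmat_carrier by simp
    finally have BG: "B = Gmat" .
    show "vec (N+1) (f (n+1)) = B *\<^sub>v vec (N+1) (f n)
                \<and> vec (N+1) (f (n+1)) = (B ^\<^sub>m n) *\<^sub>v vec (N+1) (f 1)"
      using vstep[OF n] vpow[of 0 n] BG by (simp add: ac_simps)
  qed
  have fin: "finite {k. eigenvalue Am k}"
  proof -
    have "char_poly Am \<noteq> 0" using degree_monic_char_poly[OF Am_carrier] by auto
    hence "finite {k. poly (char_poly Am) k = 0}" by (rule poly_roots_finite)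
    thus ?thesis using eigenvalue_root_char_poly[OF Am_carrier] by simp
  qed
  have sig_eig: "(\<Sum>j=0..N. Aent i j * \<sigma> j) = \<sigma> i / L" if i: "i \<le> N" for i
  proof -
    have "\<sigma> i = (\<Sum>j=0..N. Aent i j * (\<Sum>k=0..N. Gm j k * \<sigma> k))" by (rule A_G_ident[OF i, symmetric])
    also have "\<dots> = (\<Sum>j=0..N. Aent i j * (L * \<sigma> j))" using L(3) by (intro sum.cong) auto
    also have "\<dots> = L * (\<Sum>j=0..N. Aent i j * \<sigma> j)" by (simp add: sum_distrib_left mult_ac)
    finally show ?thesis using L(1) by (simp add: field_simps)
  qed
  have in_set: "eigenvalue Am (1 / L)"
    unfolding eigenvalue_def eigenvector_def
  proof (intro exI[of _ "vec (N+1) \<sigma>"] conjI)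
    show "vec (N+1) \<sigma> \<in> carrier_vec (dim_row Am)" using Am_carrier by simp
    show "vec (N+1) \<sigma> \<noteq> 0\<^sub>v (dim_row Am)"
    proof
      assume "vec (N+1) \<sigma> = 0\<^sub>v (dim_row Am)"
      hence "vec (N+1) \<sigma> $ 0 = 0\<^sub>v (dim_row Am) $ 0" by simp
      thus False using L(2)[rule_format, of 0] Am_carrier by simp
    qed
    show "Am *\<^sub>v vec (N+1) \<sigma> = (1 / L) \<cdot>\<^sub>v vec (N+1) \<sigma>"
    proof (rule eq_vecI)
      fix i assume "i < dim_vec ((1 / L) \<cdot>\<^sub>v vec (N+1) \<sigma>)"
      hence i: "i \<le> N" by simp
      show "(Am *\<^sub>v vec (N+1) \<sigma>) $ i = ((1 / L) \<cdot>\<^sub>v vec (N+1) \<sigma>) $ i"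
        using Am_mult_vec[OF i, of \<sigma>] sig_eig[OF i] i by simp
    qed (use Am_carrier in simp)
  qed
  have lower: "1 / L \<le> k" if ev: "eigenvalue Am k" for k
  proof -
    obtain v where v: "v \<in> carrier_vec (N+1)" "v \<noteq> 0\<^sub>v (N+1)" "Am *\<^sub>v v = k \<cdot>\<^sub>v v"
      using ev Am_carrier unfolding eigenvalue_def eigenvector_def by auto
    define x where "x j = v $ j" for j
    have vv: "v = vec (N+1) x" unfolding x_def by (rule eq_vecI) (use v in auto)
    have xe: "(\<Sum>j=0..N. Aent i j * x j) = k * x i" if "i \<le> N" for i
    proof -
      have "(Am *\<^sub>v v) $ i = (k \<cdot>\<^sub>v v) $ i" using v by simp
      thus ?thesis using that v unfolding vv by (simp add: Am_mult_vec)
    qed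
    obtain j where j: "j \<le> N" "x j \<noteq> 0"
    proof -
      have "\<exists>j\<le>N. x j \<noteq> 0"
      proof (rule ccontr)
        assume "\<not> ?thesis"
        hence "v = 0\<^sub>v (N+1)" unfolding vv by (intro eq_vecI) auto
        thus False using v by simp
      qed
      thus ?thesis using that by blast
    qed
    have k0: "k \<ge> 0" by (rule eig_nonneg[OF xe j])
    have "Gmat *\<^sub>v (Am *\<^sub>v v) = (Gmat * Am) *\<^sub>v v"
      by (rule assoc_mult_mat_vec[symmetric, OF Gmat_carrier Am_carrier v(1)])
    also have "\<dots> = v" unfolding GA using v(1) by simp
    finally have "Gmat *\<^sub>v (k \<cdot>\<^sub>v v) = v" unfolding v(3) .
    hence "k \<cdot>\<^sub>v (Gmat *\<^sub>v v) = v" using mult_mat_vec[OF Gmat_carrier v(1)] by simp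
    hence Ge: "k * (\<Sum>j=0..N. Gm i j * x j) = x i" if "i \<le> N" for i
    proof -
      assume h: "k \<cdot>\<^sub>v (Gmat *\<^sub>v v) = v"
      have "(k \<cdot>\<^sub>v (Gmat *\<^sub>v v)) $ i = v $ i" using h by simp
      thus ?thesis using that Gmat_carrier Gmat_mult_vec[OF that, of x] unfolding vv by simp
    qed
    have kne: "k \<noteq> 0" using Ge[OF j(1)] j(2) by auto
    have "\<bar>1 / k\<bar> \<le> L"
      by (rule max_ratio[of N Gm \<sigma> L x "1/k" j])
        (use Gm_pos L(2,3) Ge kne j in \<open>auto simp: less_imp_le field_simps\<close>)
    thus ?thesis using k0 kne L(1) by (simp add: field_simps)
  qed
  have lam: "lambda_min Am = 1 / L"
    unfolding lambda_min_def by (rule Min_eqI) (use fin in_set lower in auto)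
  have II: "bd_II a b N (f (Suc n)) i = f (Suc (Suc n)) i / f (Suc n) i" if "i \<le> N" for n i
    using f_rec[of "Suc n" i] fpos[of "Suc n" i] that by (simp add: field_simps)
  have l1: "\<forall>i\<le>N. (\<lambda>n. bd_II a b N (f n) i) \<longlonglongrightarrow> L"
  proof (intro allI impI)
    fix i assume i: "i \<le> N"
    have "(\<lambda>n. bd_II a b N (f (n + 1)) i) \<longlonglongrightarrow> L" using L(4) i II by simp
    thus "(\<lambda>n. bd_II a b N (f n) i) \<longlonglongrightarrow> L" by (rule LIMSEQ_offset)
  qed
  have img: "(\<lambda>i. bd_II a b N (f (n + 1)) i) ` {0..N} = (\<lambda>i. f (Suc (Suc n)) i / f (Suc n) i) ` {0..N}" for n
    using II by (intro image_cong) auto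
  have l2: "(\<lambda>n. Min ((\<lambda>i. bd_II a b N (f n) i) ` {0..N})) \<longlonglongrightarrow> L"
    by (rule LIMSEQ_offset[where k=1]) (use L(5) img in simp)
  have l3: "(\<lambda>n. Max ((\<lambda>i. bd_II a b N (f n) i) ` {0..N})) \<longlonglongrightarrow> L"
    by (rule LIMSEQ_offset[where k=1]) (use L(6) img in simp)
  have lam': "1 / lambda_min Am = L" using lam L(1) by simp
  show ?thesis unfolding lam' using inv part2 l1 l2 l3 by blast
qed

end
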